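(* For every modal formula $A$: if $\mathsf{BIGL}\models A$ then $\mathsf{PIGL}\models A$.
   Context: Modal formulas: $A ::= p \mid \bot \mid A\wedge A \mid A \vee A \mid A \to A \mid \Box A \mid \Diamond A$ over propositional symbols $\mathsf{Pr}$. Birelational models $\mathcal B=(W,\le,R^{\mathcal B},V)$: nonempty $W$, partial order $\le$, $R^{\mathcal B}\subseteq W^2$ with (F1) $w\le w',wR^{\mathcal B}v\Rightarrow\exists v'(v\le v'\wedge w'R^{\mathcal B}v')$ and (F2) $wR^{\mathcal B}v,v\le v'\Rightarrow\exists w'(w\le w'\wedge w'R^{\mathcal B}v')$, monotone valuation $V:W\to\mathcal P(\mathsf{Pr})$. Satisfaction: $p$ via $V$; $\bot$ never; $\wedge,\vee$ pointwise; $w\models A\to B$ iff every $w'\ge w$ satisfying $A$ satisfies $B$; $w\models\Box A$ iff for all $w'\ge w$ and $v$ with $w'R^{\mathcal B}v$, $v\models A$; $w\models\Diamond A$ iff some $v$ with $wR^{\mathcal B}v$ satisfies $A$. $\mathsf{BIGL}$ is the class of birelational models with $R^{\mathcal B}$ transitive and no infinite chain $x_1\le y_1R^{\mathcal B}x_2\le y_2R^{\mathcal B}x_3\cdots$; $\mathsf{BIGL}\models A$ means every world of every such model satisfies $A$. A Kripke structure $\mathcal K$: a nonempty poset $(W,\le)$; nonempty domains $D_w$ with $D_w\subseteq D_{w'}$ for $w\le w'$; maps $\mathsf{Pr}_w:\mathsf{Pr}\to\mathcal P(D_w)$, monotone in $w$; relations $R_w\subseteq D_w\times D_w$ with $R_w\subseteq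 R_{w'}$ for $w\le w'$. A $w$-environment is $\rho:\mathrm{Var}\to D_w$. $\mathcal K,w\models^\rho x:A$ is defined by: $x:p$ iff $\rho(x)\in\mathsf{Pr}_w(p)$; $\bot$ never; $\wedge,\vee$ pointwise; $x:A\to B$ iff for all $w'\ge w$, $\mathcal K,w'\models^\rho x:A$ implies $\mathcal K,w'\models^\rho x:B$; $x:\Box A$ iff for all $w'\ge w$ and $d\in D_{w'}$ with $\rho(x)R_{w'}d$, $\mathcal K,w'\models^{\rho[y:=d]}y:A$; $x:\Diamond A$ iff there is $d\in D_w$ with $\rho(x)R_wd$ and $\mathcal K,w\models^{\rho[y:=d]}y:A$. With $D_W=\{(w,d):d\in D_w\}$, $(w,d)\le_{D_W}(w',d')$ iff $w\le w'$ and $d=d'$, and $(w,d)R_{D_W}(w',d')$ iff $w=w'$ and $dR_wd'$, $\mathsf{PIGL}$ is the class of Kripke structures with every $R_w$ transitive and no infinite path $(w_1,d_1)\le_{D_W}(w_2,d_1)R_{D_W}(w_2,d_2)\le_{D_W}(w_3,d_2)R_{D_W}\cdots$. $\mathsf{PIGL}\models A$ means $\mathcal K,w\models^\rho x:A$ for all $\mathcal K\in\mathsf{PIGL}$, all worlds $w$, all $w$-environments $\rho$, and all variables $x$. *)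

theory Defs
  imports Main
begin

datatype 'p fm =
    Atom 'p
  | Bot
  | Conj "'p fm" "'p fm"
  | Disj "'p fm" "'p fm"
  | Imp "'p fm" "'p fm"
  | Box "'p fm"
  | Dia "'p fm"

definition no_inf_chain :: "'a set \<Rightarrow> ('a \<Rightarrow> 'a \<Rightarrow> bool) \<Rightarrow> ('a \<Rightarrow> 'a \<Rightarrow> bool) \<Rightarrow> bool" where
  "no_inf_chain S le R \<longleftrightarrow>
     \<not> (\<exists>x y :: nat \<Rightarrow> 'a. (\<forall>i. x i \<in> S \<and> y i \<in> S \<and> le (x i) (y i) \<and> R (y i) (x (Suc i))))"

definition partial_order_on' :: "'a set \<Rightarrow> ('a \<Rightarrow> 'a \<Rightarrow> bool) \<Rightarrow> bool" where
  "partial_order_on' S le \<longleftrightarrow>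
     (\<forall>x\<in>S. le x x) \<and>
     (\<forall>x\<in>S. \<forall>y\<in>S. \<forall>z\<in>S. le x y \<longrightarrow> le y z \<longrightarrow> le x z) \<and>
     (\<forall>x\<in>S. \<forall>y\<in>S. le x y \<longrightarrow> le y x \<longrightarrow> x = y)"

record ('w, 'p) bmodel =
  bW :: "'w set"
  ble :: "'w \<Rightarrow> 'w \<Rightarrow> bool"
  bR :: "'w \<Rightarrow> 'w \<Rightarrow> bool"
  bV :: "'w \<Rightarrow> 'p set"

definition birel_model :: "('w, 'p) bmodel \<Rightarrow> bool" where
  "birel_model B \<longleftrightarrow>
     bW B \<noteq> {} \<and>
     partial_order_on' (bW B) (ble B) \<and>
     (\<forall>w v. bR B w v \<longrightarrow> w \<in> bW B \<and> v \<in> bW B) \<and>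
     (\<forall>w\<in>bW B. \<forall>w'\<in>bW B. \<forall>v\<in>bW B. ble B w w' \<and> bR B w v \<longrightarrow>
        (\<exists>v'\<in>bW B. ble B v v' \<and> bR B w' v')) \<and>
     (\<forall>w\<in>bW B. \<forall>v\<in>bW B. \<forall>v'\<in>bW B. bR B w v \<and> ble B v v' \<longrightarrow>
        (\<exists>w'\<in>bW B. ble B w w' \<and> bR B w' v')) \<and>
     (\<forall>w\<in>bW B. \<forall>w'\<in>bW B. ble B w w' \<longrightarrow> bV B w \<subseteq> bV B w')"

fun bsat :: "('w, 'p) bmodel \<Rightarrow> 'w \<Rightarrow> 'p fm \<Rightarrow> bool" where
  "bsat B w (Atom p) \<longleftrightarrow> p \<in> bV B w"
| "bsat B w Bot \<longleftrightarrow> False"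
| "bsat B w (Conj A C) \<longleftrightarrow> bsat B w A \<and> bsat B w C"
| "bsat B w (Disj A C) \<longleftrightarrow> bsat B w A \<or> bsat B w C"
| "bsat B w (Imp A C) \<longleftrightarrow>
     (\<forall>w'\<in>bW B. ble B w w' \<longrightarrow> bsat B w' A \<longrightarrow> bsat B w' C)"
| "bsat B w (Box A) \<longleftrightarrow>
     (\<forall>w'\<in>bW B. \<forall>v\<in>bW B. ble B w w' \<longrightarrow> bR B w' v \<longrightarrow> bsat B v A)"
| "bsat B w (Dia A) \<longleftrightarrow> (\<exists>v\<in>bW B. bR B w v \<and> bsat B v A)"

definition BIGL :: "('w, 'p) bmodel \<Rightarrow> bool" where
  "BIGL B \<longleftrightarrow> birel_model B \<and>
     (\<forall>x y z. bR B x y \<longrightarrow> bR B y z \<longrightarrow> bR B x z) \<and>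
     no_inf_chain (bW B) (ble B) (bR B)"

definition BIGL_valid :: "'w itself \<Rightarrow> 'p fm \<Rightarrow> bool" where
  "BIGL_valid _ A \<longleftrightarrow> (\<forall>B :: ('w, 'p) bmodel. BIGL B \<longrightarrow> (\<forall>w\<in>bW B. bsat B w A))"

record ('w, 'd, 'p) kstruct =
  kW :: "'w set"
  kle :: "'w \<Rightarrow> 'w \<Rightarrow> bool"
  kD :: "'w \<Rightarrow> 'd set"
  kPr :: "'w \<Rightarrow> 'p \<Rightarrow> 'd set"
  kR :: "'w \<Rightarrow> 'd \<Rightarrow> 'd \<Rightarrow> bool"

definition kripke_struct :: "('w, 'd, 'p) kstruct \<Rightarrow> bool" where
  "kripke_struct K \<longleftrightarrow>
     kW K \<noteq> {} \<and>
     partial_order_on' (kW K) (kle K) \<and>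
     (\<forall>w\<in>kW K. kD K w \<noteq> {}) \<and>
     (\<forall>w\<in>kW K. \<forall>w'\<in>kW K. kle K w w' \<longrightarrow> kD K w \<subseteq> kD K w') \<and>
     (\<forall>w\<in>kW K. \<forall>p. kPr K w p \<subseteq> kD K w) \<and>
     (\<forall>w\<in>kW K. \<forall>w'\<in>kW K. \<forall>p. kle K w w' \<longrightarrow> kPr K w p \<subseteq> kPr K w' p) \<and>
     (\<forall>w\<in>kW K. \<forall>d e. kR K w d e \<longrightarrow> d \<in> kD K w \<and> e \<in> kD K w) \<and>
     (\<forall>w\<in>kW K. \<forall>w'\<in>kW K. \<forall>d e. kle K w w' \<longrightarrow> kR K w d e \<longrightarrow> kR K w' d e)"

text \<open>K, w |=^rho x : A.  In the modal clauses the paper writes rho[y:=d] with y:A;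
  we take y to be x (the value only depends on rho y).\<close>
fun ksat :: "('w, 'd, 'p) kstruct \<Rightarrow> 'w \<Rightarrow> ('v \<Rightarrow> 'd) \<Rightarrow> 'v \<Rightarrow> 'p fm \<Rightarrow> bool" where
  "ksat K w \<rho> x (Atom p) \<longleftrightarrow> \<rho> x \<in> kPr K w p"
| "ksat K w \<rho> x Bot \<longleftrightarrow> False"
| "ksat K w \<rho> x (Conj A C) \<longleftrightarrow> ksat K w \<rho> x A \<and> ksat K w \<rho> x C"
| "ksat K w \<rho> x (Disj A C) \<longleftrightarrow> ksat K w \<rho> x A \<or> ksat K w \<rho> x C"
| "ksat K w \<rho> x (Imp A C) \<longleftrightarrow>
     (\<forall>w'\<in>kW K. kle K w w' \<longrightarrow> ksat K w' \<rho> x A \<longrightarrow> ksat K w' \<rho> x C)"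
| "ksat K w \<rho> x (Box A) \<longleftrightarrow>
     (\<forall>w'\<in>kW K. \<forall>d\<in>kD K w'. kle K w w' \<longrightarrow> kR K w' (\<rho> x) d \<longrightarrow> ksat K w' (\<rho>(x := d)) x A)"
| "ksat K w \<rho> x (Dia A) \<longleftrightarrow>
     (\<exists>d\<in>kD K w. kR K w (\<rho> x) d \<and> ksat K w (\<rho>(x := d)) x A)"

definition DW :: "('w, 'd, 'p) kstruct \<Rightarrow> ('w \<times> 'd) set" where
  "DW K = {(w, d). w \<in> kW K \<and> d \<in> kD K w}"

definition le_DW :: "('w, 'd, 'p) kstruct \<Rightarrow> ('w \<times> 'd) \<Rightarrow> ('w \<times> 'd) \<Rightarrow> bool" where
  "le_DW K a b \<longleftrightarrow> kle K (fst a) (fst b) \<and> snd a = snd b"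

definition R_DW :: "('w, 'd, 'p) kstruct \<Rightarrow> ('w \<times> 'd) \<Rightarrow> ('w \<times> 'd) \<Rightarrow> bool" where
  "R_DW K a b \<longleftrightarrow> fst a = fst b \<and> kR K (fst a) (snd a) (snd b)"

definition PIGL :: "('w, 'd, 'p) kstruct \<Rightarrow> bool" where
  "PIGL K \<longleftrightarrow> kripke_struct K \<and>
     (\<forall>w\<in>kW K. \<forall>x y z. kR K w x y \<longrightarrow> kR K w y z \<longrightarrow> kR K w x z) \<and>
     no_inf_chain (DW K) (le_DW K) (R_DW K)"

definition PIGL_valid :: "'w itself \<Rightarrow> 'd itself \<Rightarrow> 'v itself \<Rightarrow> 'p fm \<Rightarrow> bool" where
  "PIGL_valid _ _ _ A \<longleftrightarrow>
     (\<forall>K :: ('w, 'd, 'p) kstruct. PIGL K \<longrightarrow>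
        (\<forall>w\<in>kW K. \<forall>\<rho> :: 'v \<Rightarrow> 'd. (\<forall>v. \<rho> v \<in> kD K w) \<longrightarrow> (\<forall>x. ksat K w \<rho> x A)))"

end

theory Submission
  imports Defs
begin

definition toB :: "('w, 'd, 'p) kstruct \<Rightarrow> ('w \<times> 'd, 'p) bmodel" where
  "toB K = \<lparr> bW = DW K, ble = le_DW K,
     bR = (\<lambda>a b. a \<in> DW K \<and> b \<in> DW K \<and> R_DW K a b),
     bV = (\<lambda>a. {p. snd a \<in> kPr K (fst a) p}) \<rparr>"

lemma toB_BIGL:
  assumes "PIGL K"
  shows "BIGL (toB K)"
proof -
  have ks: "kripke_struct K" and tr: "\<forall>w\<in>kW K. \<forall>x y z. kR K w x y \<longrightarrow> kR K w y z \<longrightarrow> kR K w x z"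
    and nc: "no_inf_chain (DW K) (le_DW K) (R_DW K)" using assms by (auto simp: PIGL_def)
  have kW: "kW K \<noteq> {}" and refl: "\<forall>x\<in>kW K. kle K x x"
    and trans: "\<forall>x\<in>kW K. \<forall>y\<in>kW K. \<forall>z\<in>kW K. kle K x y \<longrightarrow> kle K y z \<longrightarrow> kle K x z"
    and anti: "\<forall>x\<in>kW K. \<forall>y\<in>kW K. kle K x y \<longrightarrow> kle K y x \<longrightarrow> x = y"
    and Dne: "\<forall>w\<in>kW K. kD K w \<noteq> {}"
    and Dmono: "\<forall>w\<in>kW K. \<forall>w'\<in>kW K. kle K w w' \<longrightarrow> kD K w \<subseteq> kD K w'"
    and Prmono: "\<forall>w\<in>kW K. \<forall>w'\<in>kW K. \<forall>p. kle K w w' \<longrightarrow> kPr K w p \<subseteq> kPr K w' p"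
    and RD: "\<forall>w\<in>kW K. \<forall>d e. kR K w d e \<longrightarrow> d \<in> kD K w \<and> e \<in> kD K w"
    and Rmono: "\<forall>w\<in>kW K. \<forall>w'\<in>kW K. \<forall>d e. kle K w w' \<longrightarrow> kR K w d e \<longrightarrow> kR K w' d e"
    using ks unfolding kripke_struct_def partial_order_on'_def by metis+
  note k = Dmono Rmono
  have ne: "DW K \<noteq> {}"
  proof -
    obtain w where w: "w \<in> kW K" using kW by auto
    then obtain d where d: "d \<in> kD K w" using Dne by blast
    have "(w, d) \<in> DW K" using w d by (simp add: DW_def)
    then show ?thesis by blast
  qed
  have po: "partial_order_on' (DW K) (le_DW K)"
    unfolding partial_order_on'_def
  proof (intro conjI ballI impI)
    fix a assume "a \<in> DW K" then show "le_DW K a a" using refl by (simp add: DW_def le_DW_def split_beta)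
  next
    fix a b c assume a: "a \<in> DW K" "b \<in> DW K" "c \<in> DW K" "le_DW K a b" "le_DW K b c"
    have "fst a \<in> kW K" "fst b \<in> kW K" "fst c \<in> kW K" using a by (simp_all add: DW_def split_beta)
    moreover have "kle K (fst a) (fst b)" "kle K (fst b) (fst c)" "snd a = snd b" "snd b = snd c"
      using a by (simp_all add: le_DW_def)
    ultimately show "le_DW K a c" using trans unfolding le_DW_def by metis
  next
    fix a b assume a: "a \<in> DW K" "b \<in> DW K" "le_DW K a b" "le_DW K b a"
    have "fst a \<in> kW K" "fst b \<in> kW K" using a by (simp_all add: DW_def split_beta)
    moreover have "kle K (fst a) (fst b)" "kle K (fst b) (fst a)" "snd a = snd b"
      using a by (simp_all add: le_DW_def)
    ultimately show "a = b" using anti by (metis prod_eq_iff)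
  qed
  have F1: "\<forall>w\<in>DW K. \<forall>w'\<in>DW K. \<forall>v\<in>DW K. le_DW K w w' \<and> (w \<in> DW K \<and> v \<in> DW K \<and> R_DW K w v) \<longrightarrow>
        (\<exists>v'\<in>DW K. le_DW K v v' \<and> (w' \<in> DW K \<and> v' \<in> DW K \<and> R_DW K w' v'))"
  proof (intro ballI impI)
    fix a b c assume a: "a \<in> DW K" "b \<in> DW K" "c \<in> DW K"
      "le_DW K a b \<and> (a \<in> DW K \<and> c \<in> DW K \<and> R_DW K a c)"
    obtain w d where "a = (w, d)" by force
    obtain w' d' where "b = (w', d')" by force
    obtain u e where "c = (u, e)" by force
    note xs = a \<open>a = _\<close> \<open>b = _\<close> \<open>c = _\<close>
    have h: "w \<in> kW K" "w' \<in> kW K" "kle K w w'" "d' = d" "u = w" "kR K w d e" "e \<in> kD K w"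
      using xs by (auto simp: DW_def le_DW_def R_DW_def)
    have "e \<in> kD K w'" "kR K w' d e" using h k by blast+
    then show "\<exists>v'\<in>DW K. le_DW K c v' \<and> (b \<in> DW K \<and> v' \<in> DW K \<and> R_DW K b v')"
      using xs h by (intro bexI[of _ "(w', e)"]) (auto simp: DW_def le_DW_def R_DW_def)
  qed
  have F2: "\<forall>w\<in>DW K. \<forall>v\<in>DW K. \<forall>v'\<in>DW K. (w \<in> DW K \<and> v \<in> DW K \<and> R_DW K w v) \<and> le_DW K v v' \<longrightarrow>
        (\<exists>w'\<in>DW K. le_DW K w w' \<and> (w' \<in> DW K \<and> v' \<in> DW K \<and> R_DW K w' v'))"
  proof (intro ballI impI)
    fix a b c assume a: "a \<in> DW K" "b \<in> DW K" "c \<in> DW K"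
      "(a \<in> DW K \<and> b \<in> DW K \<and> R_DW K a b) \<and> le_DW K b c"
    obtain w d where "a = (w, d)" by force
    obtain w' d' where "b = (w', d')" by force
    obtain u e where "c = (u, e)" by force
    note xs = a \<open>a = _\<close> \<open>b = _\<close> \<open>c = _\<close>
    have h: "w \<in> kW K" "u \<in> kW K" "w' = w" "kle K w u" "e = d'" "kR K w d d'" "d \<in> kD K w"
      using xs by (auto simp: DW_def le_DW_def R_DW_def)
    have "d \<in> kD K u" "kR K u d d'" using h k by blast+
    then show "\<exists>w'\<in>DW K. le_DW K a w' \<and> (w' \<in> DW K \<and> c \<in> DW K \<and> R_DW K w' c)"
      using xs h by (intro bexI[of _ "(u, d)"]) (auto simp: DW_def le_DW_def R_DW_def)
  qed
  have V: "\<forall>w\<in>DW K. \<forall>w'\<in>DW K. le_DW K w w' \<longrightarrow> {p. snd w \<in> kPr K (fst w) p} \<subseteq> {p. snd w' \<in> kPr K (fst w') p}"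
  proof (intro ballI impI subsetI)
    fix a b p assume "a \<in> DW K" "b \<in> DW K" "le_DW K a b" "p \<in> {p. snd a \<in> kPr K (fst a) p}"
    then show "p \<in> {p. snd b \<in> kPr K (fst b) p}" using Prmono unfolding DW_def le_DW_def
      by (cases a; cases b) auto
  qed
  have bm: "birel_model (toB K)"
    unfolding birel_model_def toB_def bmodel.simps
    apply (intro conjI)
         apply (rule ne)
        apply (rule po)
       apply blast
      apply (rule F1)
     apply (rule F2)
    apply (rule V)
    done
  have "no_inf_chain (bW (toB K)) (ble (toB K)) (bR (toB K))"
    unfolding no_inf_chain_def
  proof
    assume "\<exists>x y. \<forall>i. x i \<in> bW (toB K) \<and> y i \<in> bW (toB K) \<and> ble (toB K) (x i) (y i) \<and> bR (toB K) (y i) (x (Suc i))"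
    then obtain x y where c: "\<forall>i. x i \<in> bW (toB K) \<and> y i \<in> bW (toB K) \<and> ble (toB K) (x i) (y i) \<and> bR (toB K) (y i) (x (Suc i))"
      by blast
    have "\<forall>i. x i \<in> DW K \<and> y i \<in> DW K \<and> le_DW K (x i) (y i) \<and> R_DW K (y i) (x (Suc i))"
      using c by (simp add: toB_def)
    then show False using nc unfolding no_inf_chain_def by blast
  qed
  moreover have "\<forall>x y z. bR (toB K) x y \<longrightarrow> bR (toB K) y z \<longrightarrow> bR (toB K) x z"
  proof (intro allI impI)
    fix a b c assume "bR (toB K) a b" "bR (toB K) b c"
    then have "a \<in> DW K" "c \<in> DW K" "fst a = fst b" "fst b = fst c" "kR K (fst a) (snd a) (snd b)"
      "kR K (fst b) (snd b) (snd c)" "fst a \<in> kW K" by (auto simp: toB_def R_DW_def DW_def)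
    then show "bR (toB K) a c" using tr by (simp add: toB_def R_DW_def)
  qed
  ultimately show ?thesis using bm by (simp add: BIGL_def)
qed

lemma sat_eq:
  assumes "kripke_struct K"
  shows "w \<in> kW K \<Longrightarrow> \<rho> x \<in> kD K w \<Longrightarrow> ksat K w \<rho> x A \<longleftrightarrow> bsat (toB K) (w, \<rho> x) A"
proof (induction A arbitrary: w \<rho>)
  case (Imp A1 A2)
  note k = assms[unfolded kripke_struct_def]
  show ?case
  proof
    assume H: "ksat K w \<rho> x (Imp A1 A2)"
    show "bsat (toB K) (w, \<rho> x) (Imp A1 A2)"
    proof (simp, intro ballI impI)
      fix w' assume a: "w' \<in> bW (toB K)" "ble (toB K) (w, \<rho> x) w'" "bsat (toB K) w' A1"
      obtain u e where w': "w' = (u, e)" by force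
      have u: "u \<in> kW K" "e = \<rho> x" "kle K w u" "\<rho> x \<in> kD K u"
        using a w' by (auto simp: toB_def DW_def le_DW_def)
      show "bsat (toB K) w' A2" using H Imp u a w' by auto
    qed
  next
    assume H: "bsat (toB K) (w, \<rho> x) (Imp A1 A2)"
    show "ksat K w \<rho> x (Imp A1 A2)"
    proof (simp, intro ballI impI)
      fix u assume a: "u \<in> kW K" "kle K w u" "ksat K u \<rho> x A1"
      have d: "\<rho> x \<in> kD K u" using k a Imp.prems by blast
      have "(u, \<rho> x) \<in> bW (toB K)" "ble (toB K) (w, \<rho> x) (u, \<rho> x)"
        using a d by (auto simp: toB_def DW_def le_DW_def)
      then show "ksat K u \<rho> x A2" using H Imp a d by auto
    qed
  qed
next
  case (Box A)
  note k = assms[unfolded kripke_struct_def]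
  show ?case
  proof
    assume H: "ksat K w \<rho> x (Box A)"
    show "bsat (toB K) (w, \<rho> x) (Box A)"
    proof (simp, intro ballI impI)
      fix w' v assume a: "w' \<in> bW (toB K)" "v \<in> bW (toB K)" "ble (toB K) (w, \<rho> x) w'" "bR (toB K) w' v"
      obtain u e where w': "w' = (u, e)" by force
      obtain u2 e2 where v: "v = (u2, e2)" by force
      have u: "u \<in> kW K" "e = \<rho> x" "kle K w u" "u2 = u" "e2 \<in> kD K u" "kR K u (\<rho> x) e2"
        using a w' v by (auto simp: toB_def DW_def le_DW_def R_DW_def)
      have "ksat K u (\<rho>(x := e2)) x A" using H u by auto
      then show "bsat (toB K) v A" using Box.IH[of u "\<rho>(x := e2)"] u v by (auto simp: fun_upd_def)
    qed
  next
    assume H: "bsat (toB K) (w, \<rho> x) (Box A)"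
    show "ksat K w \<rho> x (Box A)"
    proof (simp, intro ballI impI)
      fix u d assume a: "u \<in> kW K" "d \<in> kD K u" "kle K w u" "kR K u (\<rho> x) d"
      have d: "\<rho> x \<in> kD K u" using k a Box.prems by blast
      have "(u, \<rho> x) \<in> bW (toB K)" "ble (toB K) (w, \<rho> x) (u, \<rho> x)"
        "(u, d) \<in> bW (toB K)" "bR (toB K) (u, \<rho> x) (u, d)"
        using a d by (auto simp: toB_def DW_def le_DW_def R_DW_def)
      then have "bsat (toB K) (u, d) A" using H by auto
      then show "ksat K u (\<rho>(x := d)) x A" using Box.IH[of u "\<rho>(x := d)"] a by (auto simp: fun_upd_def)
    qed
  qed
next
  case (Dia A)
  note k = assms[unfolded kripke_struct_def]
  show ?case
  proof
    assume H: "ksat K w \<rho> x (Dia A)"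
    then obtain d where a: "d \<in> kD K w" "kR K w (\<rho> x) d" "ksat K w (\<rho>(x := d)) x A" by auto
    have "(w, d) \<in> bW (toB K)" "bR (toB K) (w, \<rho> x) (w, d)"
      using a Dia.prems by (auto simp: toB_def DW_def R_DW_def)
    moreover have "bsat (toB K) (w, d) A" using Dia.IH[of w "\<rho>(x := d)"] a Dia.prems by (auto simp: fun_upd_def)
    ultimately show "bsat (toB K) (w, \<rho> x) (Dia A)" by auto
  next
    assume H: "bsat (toB K) (w, \<rho> x) (Dia A)"
    then obtain v where v: "v \<in> bW (toB K)" "bR (toB K) (w, \<rho> x) v" "bsat (toB K) v A" by auto
    obtain u d where vv: "v = (u, d)" by force
    have a: "u = w" "d \<in> kD K w" "kR K w (\<rho> x) d"
      using v vv by (auto simp: toB_def DW_def R_DW_def)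
    have "ksat K w (\<rho>(x := d)) x A" using Dia.IH[of w "\<rho>(x := d)"] a v vv Dia.prems by (auto simp: fun_upd_def)
    then show "ksat K w \<rho> x (Dia A)" using a by auto
  qed
qed (auto simp: toB_def)

theorem mainTheorem7:
  fixes A :: "'p fm"
  assumes "BIGL_valid TYPE('w \<times> 'd) A"
  shows "PIGL_valid TYPE('w) TYPE('d) TYPE('v) A"
  unfolding PIGL_valid_def
proof (intro allI impI ballI)
  fix K :: "('w, 'd, 'p) kstruct" and w and \<rho> :: "'v \<Rightarrow> 'd" and x
  assume P: "PIGL K" and w: "w \<in> kW K" and r: "\<forall>v. \<rho> v \<in> kD K w"
  have "BIGL (toB K)" using toB_BIGL[OF P] .
  moreover have "(w, \<rho> x) \<in> bW (toB K)" using w r by (simp add: toB_def DW_def)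
  ultimately have b: "bsat (toB K) (w, \<rho> x) A" using assms unfolding BIGL_valid_def by blast
  have ks: "kripke_struct K" using P by (simp add: PIGL_def)
  have rx: "\<rho> x \<in> kD K w" using r by blast
  show "ksat K w \<rho> x A" using sat_eq[of K w \<rho> x A, OF ks w rx] b by simp
qed

end
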